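(* Let $X$ be a Banach space, let $\mu$ be a measure of noncompactness on $X$, and let $A$ be a nonempty, closed, bounded and convex subset of $X$. Let $T:A\to A$ be a continuous operator such that for every nonempty subset $Y\subseteq A$, \[ \Phi\left(\int_0^{\mu(TY)}\varphi(\gamma)\,d\gamma\right)\leqslant \Psi\left(\int_0^{\mu(Y)}\varphi(\gamma)\,d\gamma\right), \] where: (i) $\Psi:\mathbb{R}^+\to\mathbb{R}^+$ is a nondecreasing and concave function such that $\lim_{n\to\infty}\Psi^n(t)=0$ for all $t\geqslant 0$ (here $\Psi^n$ denotes the $n$-th iterate of $\Psi$); (ii) $\Phi:\mathbb{R}^+\to\mathbb{R}^+$ is a nondecreasing subadditive function such that $\Phi(t)\geqslant t$ for all $t\ge 0$ and, for every sequence $(x_n)$ in $\mathbb{R}^+$, $\lim_{n\to\infty}\Phi(x_n)=0$ if and only if $\lim_{n\to\infty}x_n=0$; (iii) $\varphi:[0,+\infty)\to[0,+\infty)$ is summable (Lebesgue integrable with finite integral) on each compact subset of $[0,+\infty)$ and $\int_0^{\epsilon}\varphi(\omega)\,d\omega>0$ for each $\epsilon>0$. Then $T$ has at least one fixed point in $A$.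
   Context: $\mathcal{B}_X$ denotes the family of nonempty bounded subsets of $X$, $\overline{B}$ the closure and $\mathrm{Conv}\,B$ the closed convex hull of $B$. A measure of noncompactness on $X$ is a map $\mu:\mathcal{B}_X\to[0,\infty)$ such that: (1) $\mu(B)=0$ iff $B$ is precompact; (2) $B\subseteq C\Rightarrow \mu(B)\le\mu(C)$; (3) $\mu(\overline{B})=\mu(B)$; (4) $\mu(\mathrm{Conv}\,B)=\mu(B)$; (5) $\mu(\lambda B+(1-\lambda)C)\le\lambda\mu(B)+(1-\lambda)\mu(C)$ for $\lambda\in[0,1]$; (6) if $(B_n)$ is a decreasing sequence ($B_{n+1}\subseteq B_n$) of closed sets in $\mathcal{B}_X$ with $\lim_n\mu(B_n)=0$, then $\bigcap_n B_n$ is nonempty and precompact. A function $\Phi$ is subadditive if $\Phi(s+t)\le\Phi(s)+\Phi(t)$ for all $s,t\ge0$. *)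

theory Defs
  imports "HOL-Analysis.Analysis"
begin

abbreviation precompact :: "'a::metric_space set \<Rightarrow> bool" where
  "precompact B \<equiv> totally_bounded B"

definition bdd_sets :: "'a::real_normed_vector set set" where
  "bdd_sets = {B. B \<noteq> {} \<and> bounded B}"

definition Conv :: "'a::real_normed_vector set \<Rightarrow> 'a set" where
  "Conv B = closure (convex hull B)"

definition set_comb :: "real \<Rightarrow> 'a::real_vector set \<Rightarrow> 'a set \<Rightarrow> 'a set" where
  "set_comb lam B C = {lam *\<^sub>R b + (1 - lam) *\<^sub>R c | b c. b \<in> B \<and> c \<in> C}"

text \<open>A measure of noncompactness; mu is only constrained on nonempty bounded sets.\<close>
definition measure_of_noncompactness :: "('a::real_normed_vector set \<Rightarrow> real) \<Rightarrow> bool" where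
  "measure_of_noncompactness mu \<longleftrightarrow>
     (\<forall>B\<in>bdd_sets. mu B \<ge> 0) \<and>
     (\<forall>B\<in>bdd_sets. mu B = 0 \<longleftrightarrow> precompact B) \<and>
     (\<forall>B\<in>bdd_sets. \<forall>C\<in>bdd_sets. B \<subseteq> C \<longrightarrow> mu B \<le> mu C) \<and>
     (\<forall>B\<in>bdd_sets. mu (closure B) = mu B) \<and>
     (\<forall>B\<in>bdd_sets. mu (Conv B) = mu B) \<and>
     (\<forall>B\<in>bdd_sets. \<forall>C\<in>bdd_sets. \<forall>lam\<in>{0..1}.
        mu (set_comb lam B C) \<le> lam * mu B + (1 - lam) * mu C) \<and>
     (\<forall>Bs :: nat \<Rightarrow> 'a set.
        (\<forall>n. Bs n \<in> bdd_sets \<and> closed (Bs n) \<and> Bs (Suc n) \<subseteq> Bs n) \<and>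
        (\<lambda>n. mu (Bs n)) \<longlonglongrightarrow> 0 \<longrightarrow>
        (\<Inter>n. Bs n) \<noteq> {} \<and> precompact (\<Inter>n. Bs n))"

end

theory Submission
  imports Defs
begin


lemma approx_brouwer_cube:
  fixes n :: nat and f :: "(nat \<Rightarrow> real) \<Rightarrow> (nat \<Rightarrow> real)" and C :: "(nat \<Rightarrow> real) set"
  assumes C_def: "C = {x. \<forall>i<n. 0 \<le> x i \<and> x i \<le> 1}"
    and fC: "\<forall>x\<in>C. f x \<in> C"
    and uc: "\<forall>e>0. \<exists>d>0. \<forall>x\<in>C. \<forall>y\<in>C. (\<forall>i<n. \<bar>x i - y i\<bar> < d) \<longrightarrow> (\<forall>i<n. \<bar>f x i - f y i\<bar> < e)"
    and e: "e > 0"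
  shows "\<exists>x\<in>C. \<forall>i<n. \<bar>f x i - x i\<bar> < e"
proof (rule ccontr)
  assume "\<not> ?thesis"
  then have nd: "\<forall>x\<in>C. \<exists>i<n. e \<le> \<bar>f x i - x i\<bar>" by (auto simp: not_less)
  have h1: "\<forall>x. x \<in> C \<longrightarrow> f x \<in> C" using fC by auto
  have h2: "\<forall>x. x \<in> C \<longrightarrow> (\<forall>i. i < n \<longrightarrow> 0 \<le> x i \<and> x i \<le> 1)" using C_def by auto
  obtain l :: "(nat\<Rightarrow>real) \<Rightarrow> nat \<Rightarrow> nat" where l:
    "\<forall>x i. l x i \<le> 1"
    "\<forall>x i. x \<in> C \<and> i < n \<and> x i = 0 \<longrightarrow> l x i = 0"
    "\<forall>x i. x \<in> C \<and> i < n \<and> x i = 1 \<longrightarrow> l x i = 1"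
    "\<forall>x i. x \<in> C \<and> i < n \<and> l x i = 0 \<longrightarrow> x i \<le> f x i"
    "\<forall>x i. x \<in> C \<and> i < n \<and> l x i = 1 \<longrightarrow> f x i \<le> x i"
    using kuhn_labelling_lemma'[of "\<lambda>x. x \<in> C" f "\<lambda>i. i < n", OF h1 h2] by (elim exE conjE) (rule that; assumption)
  have l01: "\<forall>x i. l x i = 0 \<or> l x i = 1"
  proof (intro allI)
    fix x i have "l x i \<le> 1" using l(1) by blast
    then show "l x i = 0 \<or> l x i = 1" by arith
  qed
  have "e/3 > 0" using e by simp
  obtain d where d: "d > 0" "\<forall>x\<in>C. \<forall>y\<in>C. (\<forall>i<n. \<bar>x i - y i\<bar> < d) \<longrightarrow> (\<forall>i<n. \<bar>f x i - f y i\<bar> < e/3)"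
    using uc \<open>e/3 > 0\<close> by blast
  obtain p :: nat where p: "max (1/d) (3/e) < real p" using reals_Archimedean2 by blast
  have pd0: "1/d < real p" using p by simp
  have "0 < 1/d" using d by simp
  then have pp: "real p > 0" using pd0 by linarith
  have "1 < real p * d" using pd0 d by (simp add: divide_less_eq)
  then have pd: "1 / real p < d" using pp by (simp add: divide_simps mult.commute)
  have "3/e < real p" using p by simp
  then have "3 < real p * e" using e by (simp add: divide_less_eq)
  then have pe: "1 / real p < e/3" using pp by (simp add: divide_simps mult.commute)
  define pt where "pt = (\<lambda>(x::nat\<Rightarrow>nat) j. real (x j) / real p)"
  have ptC: "pt x \<in> C" if "\<forall>i<n. x i \<le> p" for x
    using that pp by (auto simp: C_def pt_def divide_le_eq_1)
  define label where "label = (\<lambda>x i. l (pt x) i)"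
  have q1: "\<forall>x. (\<forall>i<n. x i \<le> p) \<longrightarrow> (\<forall>i<n. label x i = (0::nat) \<or> label x i = 1)"
    using l01 unfolding label_def by blast
  have q2: "\<forall>x. (\<forall>i<n. x i \<le> p) \<longrightarrow> (\<forall>i<n. x i = 0 \<longrightarrow> label x i = 0)"
    using l(2) ptC unfolding label_def by (auto simp: pt_def)
  have q3: "\<forall>x. (\<forall>i<n. x i \<le> p) \<longrightarrow> (\<forall>i<n. x i = p \<longrightarrow> label x i = 1)"
    using l(3) ptC pp unfolding label_def by (auto simp: pt_def)
  have p0: "0 < p" using pp by simp
  obtain q where q: "\<forall>i<n. q i < p"
    and q': "\<forall>i<n. \<exists>r s. (\<forall>j<n. q j \<le> r j \<and> r j \<le> q j + 1) \<and> (\<forall>j<n. q j \<le> s j \<and> s j \<le> q j + 1) \<and> label r i \<noteq> label s i"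
    using kuhn_lemma[OF p0 q1 q2 q3] by blast
  define z where "z = pt q"
  have zC: "z \<in> C" unfolding z_def using q by (intro ptC) (auto simp: less_imp_le)
  obtain i where i: "i < n" "e \<le> \<bar>f z i - z i\<bar>" using nd zC by blast
  obtain r s where rs: "\<forall>j<n. q j \<le> r j \<and> r j \<le> q j + 1" "\<forall>j<n. q j \<le> s j \<and> s j \<le> q j + 1"
     "label r i \<noteq> label s i" using q' i(1) by blast
  have close: "pt r \<in> C \<and> (\<forall>j<n. \<bar>pt r j - z j\<bar> \<le> 1 / real p) \<and> z i \<le> pt r i"
    if "\<forall>j<n. q j \<le> r j \<and> r j \<le> q j + 1" for r
  proof -
    have "\<forall>j<n. r j \<le> p"
    proof (intro allI impI)
      fix j assume "j < n"
      then have "r j \<le> q j + 1" "q j < p" using that q by auto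
      then show "r j \<le> p" by linarith
    qed
    hence "pt r \<in> C" by (rule ptC)
    moreover have "\<forall>j<n. \<bar>pt r j - z j\<bar> \<le> 1 / real p"
    proof (intro allI impI)
      fix j assume "j < n"
      then have "real (q j) \<le> real (r j)" "real (r j) \<le> real (q j) + 1" using that by auto
      then show "\<bar>pt r j - z j\<bar> \<le> 1 / real p" using pp
        by (simp add: pt_def z_def abs_le_iff diff_divide_distrib[symmetric] divide_right_mono)
    qed
    moreover have "z i \<le> pt r i" using that i(1) pp by (simp add: pt_def z_def divide_right_mono)
    ultimately show ?thesis by blast
  qed
  have cr: "pt r \<in> C" "\<forall>j<n. \<bar>pt r j - z j\<bar> \<le> 1 / real p" "z i \<le> pt r i" using close[OF rs(1)] by auto
  have cs: "pt s \<in> C" "\<forall>j<n. \<bar>pt s j - z j\<bar> \<le> 1 / real p" "z i \<le> pt s i" using close[OF rs(2)] by auto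
  have "\<forall>j<n. \<bar>pt r j - z j\<bar> < d" using cr(2) pd by (auto intro: le_less_trans)
  then have "\<forall>j<n. \<bar>f (pt r) j - f z j\<bar> < e/3" using d(2) cr(1) zC by blast
  then have fr: "\<bar>f (pt r) i - f z i\<bar> < e/3" using i(1) by blast
  have "\<forall>j<n. \<bar>pt s j - z j\<bar> < d" using cs(2) pd by (auto intro: le_less_trans)
  then have "\<forall>j<n. \<bar>f (pt s) j - f z j\<bar> < e/3" using d(2) cs(1) zC by blast
  then have fs: "\<bar>f (pt s) i - f z i\<bar> < e/3" using i(1) by blast
  have ri: "\<bar>pt r i - z i\<bar> \<le> 1 / real p" using cr(2) i(1) by blast
  have si: "\<bar>pt s i - z i\<bar> \<le> 1 / real p" using cs(2) i(1) by blast
  have lr: "l (pt r) i \<noteq> l (pt s) i" using rs(3) by (simp add: label_def)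
  have "\<bar>f z i - z i\<bar> < e"
  proof (cases "l (pt r) i = 0")
    case True
    then have "l (pt s) i = 1" using lr l01 by metis
    then have a: "f (pt s) i \<le> pt s i" using l(5) cs(1) i(1) by blast
    have b: "pt r i \<le> f (pt r) i" using l(4) cr(1) i(1) True by blast
    show ?thesis using a b fr fs ri si cr(3) cs(3) pe by (simp add: abs_le_iff abs_less_iff; linarith)
  next
    case False
    then have "l (pt r) i = 1" using l01 by metis
    then have a: "f (pt r) i \<le> pt r i" using l(5) cr(1) i(1) by blast
    have "l (pt s) i = 0" using lr \<open>l (pt r) i = 1\<close> l01 by metis
    then have b: "pt s i \<le> f (pt s) i" using l(4) cs(1) i(1) by blast
    show ?thesis using a b fr fs ri si cr(3) cs(3) pe by (simp add: abs_le_iff abs_less_iff; linarith)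
  qed
  then show False using i(2) by simp
qed



lemma rho_bound:
  fixes t s a b :: real
  assumes "0 \<le> t" "t \<le> 1" "0 \<le> s" "s \<le> 1" "1 \<le> a" "1 \<le> b"
  shows "\<bar>t/a - s/b\<bar> \<le> \<bar>t - s\<bar> + \<bar>a - b\<bar>"
proof -
  have a0: "a > 0" "b > 0" using assms by auto
  have eq: "t/a - s/b = (t - s)/a + s * (b - a) / (a * b)"
    using a0 by (simp add: field_simps)
  have "\<bar>t-s\<bar> * 1 \<le> \<bar>t-s\<bar> * a" by (rule mult_left_mono) (use assms in auto)
  then have 1: "\<bar>(t - s)/a\<bar> \<le> \<bar>t - s\<bar>"
    using a0 by (simp add: abs_divide pos_divide_le_eq)
  have ab: "1 * 1 \<le> a * b" by (rule mult_mono) (use assms in auto)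
  have "s * \<bar>b - a\<bar> \<le> 1 * \<bar>b - a\<bar>" by (rule mult_right_mono) (use assms in auto)
  also have "\<dots> = \<bar>b - a\<bar> * 1" by simp
  also have "\<dots> \<le> \<bar>b - a\<bar> * (a * b)" by (rule mult_left_mono) (use ab in auto)
  finally have 2: "s * \<bar>b - a\<bar> / (a * b) \<le> \<bar>b - a\<bar>"
    using a0 by (simp add: pos_divide_le_eq)
  have 3: "\<bar>s * (b - a) / (a * b)\<bar> = s * \<bar>b - a\<bar> / (a * b)"
    using assms a0 by (simp add: abs_mult abs_divide)
  have "\<bar>t/a - s/b\<bar> \<le> \<bar>(t - s)/a\<bar> + \<bar>s * (b - a) / (a * b)\<bar>"
    unfolding eq by (rule abs_triangle_ineq)
  then show ?thesis using 1 2 3 by (simp add: abs_minus_commute)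
qed

lemma finite_uc:
  fixes g :: "nat \<Rightarrow> 'a::metric_space \<Rightarrow> real"
  assumes "\<forall>i<n. uniformly_continuous_on K (g i)"
  shows "\<forall>e>0. \<exists>d>0. \<forall>x\<in>K. \<forall>x'\<in>K. dist x x' < d \<longrightarrow> (\<forall>i<n. \<bar>g i x - g i x'\<bar> < e)"
  using assms
proof (induction n)
  case 0
  then show ?case by (auto intro: exI[of _ 1])
next
  case (Suc n)
  show ?case
  proof (intro allI impI)
    fix e :: real assume e: "e > 0"
    obtain d1 where d1: "d1 > 0" "\<forall>x\<in>K. \<forall>x'\<in>K. dist x x' < d1 \<longrightarrow> (\<forall>i<n. \<bar>g i x - g i x'\<bar> < e)"
      using Suc e by auto
    have "uniformly_continuous_on K (g n)" using Suc.prems by auto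
    then obtain d2 where d2: "d2 > 0" "\<forall>x\<in>K. \<forall>x'\<in>K. dist x' x < d2 \<longrightarrow> dist (g n x') (g n x) < e"
      using e unfolding uniformly_continuous_on_def by blast
    show "\<exists>d>0. \<forall>x\<in>K. \<forall>x'\<in>K. dist x x' < d \<longrightarrow> (\<forall>i<Suc n. \<bar>g i x - g i x'\<bar> < e)"
    proof (intro exI[of _ "min d1 d2"] conjI ballI impI allI)
      show "0 < min d1 d2" using d1 d2 by simp
      fix x x' i assume xK: "x \<in> K" "x' \<in> K" and dd: "dist x x' < min d1 d2" and i: "i < Suc n"
      show "\<bar>g i x - g i x'\<bar> < e"
      proof (cases "i < n")
        case True then show ?thesis using d1(2) xK dd by auto
      next
        case False
        then have "i = n" using i by simp
        then show ?thesis using d2(2) xK dd by (auto simp: dist_real_def dist_commute)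
      qed
    qed
  qed
qed



lemma schauder_approx_setup:
  fixes K :: "'a::real_normed_vector set" and f :: "'a \<Rightarrow> 'a"
  assumes K: "compact K" "convex K" "K \<noteq> {}" and ep: "\<epsilon> > 0"
  shows "\<exists>n::nat. \<exists>y. (\<forall>j<Suc n. y j \<in> K) \<and> (\<forall>x\<in>K. \<exists>j<Suc n. norm (x - y j) < \<epsilon>)"
proof -
  have "seq_compact K" using K(1) by (rule compact_imp_seq_compact)
  then have "\<forall>\<epsilon>>0. \<exists>k. finite k \<and> k \<subseteq> K \<and> K \<subseteq> (\<Union>x\<in>k. ball x \<epsilon>)"
    by (rule seq_compact_imp_totally_bounded)
  then obtain F where F: "finite F" "F \<subseteq> K" "K \<subseteq> (\<Union>x\<in>F. ball x \<epsilon>)"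
    using ep by meson
  have "F \<noteq> {}" using F(3) K(3) by auto
  then have cF: "card F > 0" using F(1) by (simp add: card_gt_0_iff)
  define n where "n = card F - 1"
  have cn: "card F = Suc n" using cF n_def by simp
  obtain y where y: "bij_betw y {0..<Suc n} F" using ex_bij_betw_nat_finite[OF F(1)] cn by auto
  have yim: "y ` {0..<Suc n} = F" using y by (simp add: bij_betw_def)
  have yK: "\<forall>j<Suc n. y j \<in> K" using yim F(2) by auto
  have cover: "\<forall>x\<in>K. \<exists>j<Suc n. norm (x - y j) < \<epsilon>"
  proof
    fix x assume "x \<in> K"
    then obtain z where z: "z \<in> F" "x \<in> ball z \<epsilon>" using F(3) by auto
    then obtain j where "j < Suc n" "y j = z" using yim by auto
    then show "\<exists>j<Suc n. norm (x - y j) < \<epsilon>" using z by (auto simp: dist_norm norm_minus_commute)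
  qed
  show ?thesis using yK cover by blast
qed

lemma schauder_core:
  fixes K :: "'a::real_normed_vector set" and f :: "'a \<Rightarrow> 'a" and y :: "nat \<Rightarrow> 'a"
  assumes K: "convex K" "compact K" and cf: "continuous_on K f" and fK: "f ` K \<subseteq> K"
    and ep: "\<epsilon> > 0"
    and yK: "\<forall>j<Suc n. y j \<in> K" and cover: "\<forall>x\<in>K. \<exists>j<Suc n. norm (x - y j) < \<epsilon>"
  shows "\<exists>x\<in>K. norm (f x - x) \<le> 2 * \<epsilon>"
proof -
  define w where "w = (\<lambda>j x. max 0 (\<epsilon> - norm (x - y j)))"
  define W where "W = (\<lambda>x. \<Sum>j<Suc n. w j x)"
  have w0: "\<And>j x. 0 \<le> w j x" by (simp add: w_def)
  have wle: "\<And>j x. j < Suc n \<Longrightarrow> w j x \<le> W x" unfolding W_def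
    by (rule member_le_sum) (use w0 in auto)
  have Wpos: "\<And>x. x \<in> K \<Longrightarrow> W x > 0"
  proof -
    fix x assume "x \<in> K"
    then obtain j where j: "j < Suc n" "norm (x - y j) < \<epsilon>" using cover by blast
    then have "0 < w j x" by (simp add: w_def)
    also have "w j x \<le> W x" using wle j(1) by blast
    finally show "W x > 0" .
  qed
  define lam where "lam = (\<lambda>j x. w j x / W x)"
  have lam0: "\<And>j x. 0 \<le> lam j x" unfolding lam_def W_def using w0 by (simp add: sum_nonneg)
  have lam1: "\<And>j x. x \<in> K \<Longrightarrow> j < Suc n \<Longrightarrow> lam j x \<le> 1"
    unfolding lam_def using wle Wpos by (simp add: divide_le_eq_1)
  have lamsum: "\<And>x. x \<in> K \<Longrightarrow> (\<Sum>j<Suc n. lam j x) = 1"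
  proof -
    fix x assume x: "x \<in> K"
    have "(\<Sum>j<Suc n. lam j x) = W x / W x" unfolding lam_def W_def by (simp add: sum_divide_distrib[symmetric])
    then show "(\<Sum>j<Suc n. lam j x) = 1" using Wpos[OF x] by simp
  qed
  have wcont: "\<And>j. continuous_on K (w j)" unfolding w_def by (intro continuous_intros)
  have Wcont: "continuous_on K W" unfolding W_def using wcont by (intro continuous_intros) auto
  have lamcont: "\<And>j. continuous_on K (\<lambda>x. w j x / W x)"
  proof (rule continuous_on_divide[OF wcont Wcont])
    show "\<forall>x\<in>K. W x \<noteq> 0" using Wpos by (metis less_irrefl)
  qed
  have lamuc: "\<forall>i<n. uniformly_continuous_on K (\<lambda>x. lam (Suc i) x)"
    using lamcont K(2) compact_uniformly_continuous unfolding lam_def by blast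
  define Lam where "Lam = (\<lambda>x i. lam (Suc i) x)"
  define sig where "sig = (\<lambda>t::nat\<Rightarrow>real. \<Sum>i<n. t i)"
  define rho where "rho = (\<lambda>t i. t i / max 1 (sig t))"
  define a where "a = (\<lambda>(t::nat\<Rightarrow>real) j. if j = 0 then 1 - sig t else t (j - 1))"
  define L where "L = (\<lambda>t. \<Sum>j<Suc n. a t j *\<^sub>R y j)"
  define C where "C = {t::nat\<Rightarrow>real. \<forall>i<n. 0 \<le> t i \<and> t i \<le> 1}"
  define h where "h = (\<lambda>t. Lam (f (L (rho t))))"
  have Lalt: "\<And>t. L t = y 0 + (\<Sum>i<n. t i *\<^sub>R (y (Suc i) - y 0))"
  proof -
    fix t
    have "L t = (1 - sig t) *\<^sub>R y 0 + (\<Sum>i<n. t i *\<^sub>R y (Suc i))"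
      unfolding L_def sum.lessThan_Suc_shift by (simp add: a_def)
    also have "\<dots> = y 0 + (\<Sum>i<n. t i *\<^sub>R (y (Suc i) - y 0))"
      unfolding sig_def by (simp add: scaleR_diff_right sum_subtractf scaleR_left_diff_distrib scaleR_sum_left)
    finally show "L t = y 0 + (\<Sum>i<n. t i *\<^sub>R (y (Suc i) - y 0))" .
  qed
  have sig0: "\<And>t. t \<in> C \<Longrightarrow> 0 \<le> sig t" unfolding sig_def C_def by (rule sum_nonneg) auto
  have LK: "\<And>s. s \<in> C \<Longrightarrow> sig s \<le> 1 \<Longrightarrow> L s \<in> K"
  proof -
    fix s assume s: "s \<in> C" "sig s \<le> 1"
    show "L s \<in> K" unfolding L_def
    proof (rule convex_sum[OF finite_lessThan K(1)])
      show "(\<Sum>i<Suc n. a s i) = 1" unfolding sum.lessThan_Suc_shift by (simp add: a_def sig_def)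
      show "\<And>i. i \<in> {..<Suc n} \<Longrightarrow> 0 \<le> a s i" using s by (auto simp: a_def C_def)
      show "\<And>i. i \<in> {..<Suc n} \<Longrightarrow> y i \<in> K" using yK by auto
    qed
  qed
  have rhoC: "\<And>t. t \<in> C \<Longrightarrow> rho t \<in> C \<and> sig (rho t) \<le> 1"
  proof -
    fix t assume t: "t \<in> C"
    have M: "1 \<le> max 1 (sig t)" by simp
    have "sig (rho t) = sig t / max 1 (sig t)" unfolding rho_def sig_def by (simp add: sum_divide_distrib)
    also have "\<dots> \<le> 1" using M by (subst divide_le_eq_1) auto
    finally have 1: "sig (rho t) \<le> 1" .
    have "rho t \<in> C" using t M unfolding C_def rho_def
      by (auto simp: divide_le_eq_1 intro: order_trans)
    with 1 show "rho t \<in> C \<and> sig (rho t) \<le> 1" by blast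
  qed
  have rhoid: "\<And>s. sig s \<le> 1 \<Longrightarrow> rho s = s" unfolding rho_def by (simp add: max_def)
  have LamC: "\<And>x. x \<in> K \<Longrightarrow> Lam x \<in> C \<and> sig (Lam x) = 1 - lam 0 x"
  proof -
    fix x assume x: "x \<in> K"
    have "sig (Lam x) = 1 - lam 0 x" using lamsum[OF x]
      unfolding sig_def Lam_def sum.lessThan_Suc_shift by simp
    moreover have "Lam x \<in> C" unfolding C_def Lam_def using lam0 lam1 x by auto
    ultimately show "Lam x \<in> C \<and> sig (Lam x) = 1 - lam 0 x" by blast
  qed
  have LLam: "\<And>x. x \<in> K \<Longrightarrow> L (Lam x) = (\<Sum>j<Suc n. lam j x *\<^sub>R y j)"
  proof -
    fix x assume x: "x \<in> K"
    show "L (Lam x) = (\<Sum>j<Suc n. lam j x *\<^sub>R y j)" unfolding L_def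
    proof (rule sum.cong[OF refl])
      fix j assume "j \<in> {..<Suc n}"
      show "a (Lam x) j *\<^sub>R y j = lam j x *\<^sub>R y j"
        using LamC[OF x] by (cases j) (auto simp: a_def Lam_def)
    qed
  qed
  have Pclose: "\<And>x. x \<in> K \<Longrightarrow> norm ((\<Sum>j<Suc n. lam j x *\<^sub>R y j) - x) \<le> \<epsilon>"
  proof -
    fix x assume x: "x \<in> K"
    have "x = (\<Sum>j<Suc n. lam j x) *\<^sub>R x" using lamsum[OF x] by simp
    also have "\<dots> = (\<Sum>j<Suc n. lam j x *\<^sub>R x)" by (rule scaleR_sum_left)
    finally have xs: "x = (\<Sum>j<Suc n. lam j x *\<^sub>R x)" .
    have "(\<Sum>j<Suc n. lam j x *\<^sub>R y j) - x = (\<Sum>j<Suc n. lam j x *\<^sub>R y j - lam j x *\<^sub>R x)"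
      by (subst xs) (rule sum_subtractf[symmetric])
    also have "\<dots> = (\<Sum>j<Suc n. lam j x *\<^sub>R (y j - x))" by (simp add: scaleR_diff_right)
    finally have "(\<Sum>j<Suc n. lam j x *\<^sub>R y j) - x = (\<Sum>j<Suc n. lam j x *\<^sub>R (y j - x))" .
    also have "norm \<dots> \<le> (\<Sum>j<Suc n. norm (lam j x *\<^sub>R (y j - x)))" by (rule norm_sum)
    also have "\<dots> \<le> (\<Sum>j<Suc n. lam j x * \<epsilon>)"
    proof (rule sum_mono)
      fix j assume "j \<in> {..<Suc n}"
      show "norm (lam j x *\<^sub>R (y j - x)) \<le> lam j x * \<epsilon>"
      proof (cases "norm (y j - x) \<le> \<epsilon>")
        case True
        then show ?thesis using lam0[of j x] by (simp add: mult_left_mono)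
      next
        case False
        then have "w j x = 0" unfolding w_def by (simp add: norm_minus_commute)
        then show ?thesis by (simp add: lam_def)
      qed
    qed
    also have "\<dots> = \<epsilon>" using lamsum[OF x] by (simp add: sum_distrib_right[symmetric])
    finally show "norm ((\<Sum>j<Suc n. lam j x *\<^sub>R y j) - x) \<le> \<epsilon>" .
  qed
  have hC: "\<forall>t\<in>C. h t \<in> C"
  proof
    fix t assume "t \<in> C"
    then have "L (rho t) \<in> K" using rhoC LK by blast
    then have "f (L (rho t)) \<in> K" using fK by blast
    then show "h t \<in> C" unfolding h_def using LamC by blast
  qed
  define B where "B = (\<Sum>i<n. norm (y (Suc i) - y 0)) + 1"
  have B1: "1 \<le> B" unfolding B_def by (simp add: sum_nonneg)
  have Llip: "\<And>s s'. norm (L s - L s') \<le> B * (\<Sum>i<n. \<bar>s i - s' i\<bar>)"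
  proof -
    fix s s' :: "nat \<Rightarrow> real"
    have "L s - L s' = (\<Sum>i<n. (s i - s' i) *\<^sub>R (y (Suc i) - y 0))"
      unfolding Lalt by (simp add: sum_subtractf[symmetric] scaleR_left_diff_distrib)
    also have "norm \<dots> \<le> (\<Sum>i<n. norm ((s i - s' i) *\<^sub>R (y (Suc i) - y 0)))" by (rule norm_sum)
    also have "\<dots> \<le> (\<Sum>i<n. \<bar>s i - s' i\<bar> * B)"
    proof (rule sum_mono)
      fix i assume i: "i \<in> {..<n}"
      have "norm (y (Suc i) - y 0) \<le> (\<Sum>i<n. norm (y (Suc i) - y 0))"
        by (rule member_le_sum) (use i in auto)
      then have "norm (y (Suc i) - y 0) \<le> B" unfolding B_def by linarith
      then show "norm ((s i - s' i) *\<^sub>R (y (Suc i) - y 0)) \<le> \<bar>s i - s' i\<bar> * B"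
        by (simp add: mult_left_mono)
    qed
    also have "\<dots> = B * (\<Sum>i<n. \<bar>s i - s' i\<bar>)" by (simp add: sum_distrib_left mult.commute)
    finally show "norm (L s - L s') \<le> B * (\<Sum>i<n. \<bar>s i - s' i\<bar>)" .
  qed
  have rholip: "\<And>t t' \<delta>. t \<in> C \<Longrightarrow> t' \<in> C \<Longrightarrow> (\<forall>i<n. \<bar>t i - t' i\<bar> \<le> \<delta>) \<Longrightarrow>
      (\<Sum>i<n. \<bar>rho t i - rho t' i\<bar>) \<le> real n * ((real n + 1) * \<delta>)"
  proof -
    fix t t' :: "nat \<Rightarrow> real" and \<delta> :: real
    assume t: "t \<in> C" "t' \<in> C" and td: "\<forall>i<n. \<bar>t i - t' i\<bar> \<le> \<delta>"
    have "\<bar>sig t - sig t'\<bar> = \<bar>\<Sum>i<n. t i - t' i\<bar>" unfolding sig_def by (simp add: sum_subtractf)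
    also have "\<dots> \<le> (\<Sum>i<n. \<bar>t i - t' i\<bar>)" by (rule sum_abs)
    also have "\<dots> \<le> (\<Sum>i<n. \<delta>)" by (rule sum_mono) (use td in auto)
    also have "\<dots> = real n * \<delta>" by simp
    finally have sd: "\<bar>sig t - sig t'\<bar> \<le> real n * \<delta>" .
    have md: "\<bar>max 1 (sig t) - max 1 (sig t')\<bar> \<le> \<bar>sig t - sig t'\<bar>" by (simp add: max_def)
    have "(\<Sum>i<n. \<bar>rho t i - rho t' i\<bar>) \<le> (\<Sum>i<n. (real n + 1) * \<delta>)"
    proof (rule sum_mono)
      fix i assume i: "i \<in> {..<n}"
      have "\<bar>rho t i - rho t' i\<bar> \<le> \<bar>t i - t' i\<bar> + \<bar>max 1 (sig t) - max 1 (sig t')\<bar>"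
        unfolding rho_def by (rule rho_bound) (use t i in \<open>auto simp: C_def\<close>)
      also have "\<dots> \<le> \<delta> + real n * \<delta>" using td i md sd by auto
      finally show "\<bar>rho t i - rho t' i\<bar> \<le> (real n + 1) * \<delta>" by (simp add: algebra_simps)
    qed
    also have "\<dots> = real n * ((real n + 1) * \<delta>)" by simp
    finally show "(\<Sum>i<n. \<bar>rho t i - rho t' i\<bar>) \<le> real n * ((real n + 1) * \<delta>)" .
  qed
  define N where "N = B * (real n + 1) * (real n + 1)"
  have N0: "N > 0" unfolding N_def using B1 by simp
  have Nbound: "\<And>\<delta>. 0 \<le> \<delta> \<Longrightarrow> B * (real n * ((real n + 1) * \<delta>)) \<le> N * \<delta>"
  proof -
    fix \<delta> :: real assume "0 \<le> \<delta>"
    have "B * (real n * ((real n + 1) * \<delta>)) = (B * (real n + 1) * \<delta>) * real n" by (simp add: algebra_simps)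
    also have "\<dots> \<le> (B * (real n + 1) * \<delta>) * (real n + 1)"
      by (rule mult_left_mono) (use B1 \<open>0 \<le> \<delta>\<close> in auto)
    also have "\<dots> = N * \<delta>" unfolding N_def by (simp add: algebra_simps)
    finally show "B * (real n * ((real n + 1) * \<delta>)) \<le> N * \<delta>" .
  qed
  have Nbound': "\<And>\<delta>. 0 < \<delta> \<Longrightarrow> B * (real n * ((real n + 1) * \<delta>)) < N * \<delta>"
  proof -
    fix \<delta> :: real assume "0 < \<delta>"
    have "B * (real n * ((real n + 1) * \<delta>)) = (B * (real n + 1) * \<delta>) * real n" by (simp add: algebra_simps)
    also have "\<dots> < (B * (real n + 1) * \<delta>) * (real n + 1)"
      by (rule mult_strict_left_mono) (use B1 \<open>0 < \<delta>\<close> in auto)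
    also have "\<dots> = N * \<delta>" unfolding N_def by (simp add: algebra_simps)
    finally show "B * (real n * ((real n + 1) * \<delta>)) < N * \<delta>" .
  qed
  have huc: "\<forall>e>0. \<exists>d>0. \<forall>t\<in>C. \<forall>t'\<in>C. (\<forall>i<n. \<bar>t i - t' i\<bar> < d) \<longrightarrow> (\<forall>i<n. \<bar>h t i - h t' i\<bar> < e)"
  proof (intro allI impI)
    fix e :: real assume e: "e > 0"
    have "\<forall>e>0. \<exists>d>0. \<forall>x\<in>K. \<forall>x'\<in>K. dist x x' < d \<longrightarrow> (\<forall>i<n. \<bar>lam (Suc i) x - lam (Suc i) x'\<bar> < e)"
      by (rule finite_uc[of n K "\<lambda>i. lam (Suc i)"]) (use lamuc in simp)
    then obtain d1 where d1: "d1 > 0" "\<forall>x\<in>K. \<forall>x'\<in>K. dist x x' < d1 \<longrightarrow> (\<forall>i<n. \<bar>lam (Suc i) x - lam (Suc i) x'\<bar> < e)"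
      using e by meson
    have "uniformly_continuous_on K f" using compact_uniformly_continuous[OF cf K(2)] .
    then obtain d2 where d2: "d2 > 0" "\<forall>x\<in>K. \<forall>x'\<in>K. dist x' x < d2 \<longrightarrow> dist (f x') (f x) < d1"
      using d1(1) unfolding uniformly_continuous_on_def by meson
    show "\<exists>d>0. \<forall>t\<in>C. \<forall>t'\<in>C. (\<forall>i<n. \<bar>t i - t' i\<bar> < d) \<longrightarrow> (\<forall>i<n. \<bar>h t i - h t' i\<bar> < e)"
    proof (intro exI[of _ "d2 / N"] conjI ballI impI)
      show "0 < d2 / N" using d2(1) N0 by simp
      fix t t' assume t: "t \<in> C" "t' \<in> C" and td: "\<forall>i<n. \<bar>t i - t' i\<bar> < d2 / N"
      have td': "\<forall>i<n. \<bar>t i - t' i\<bar> \<le> d2 / N" using td by (auto simp: less_imp_le)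
      have "norm (L (rho t) - L (rho t')) \<le> B * (\<Sum>i<n. \<bar>rho t i - rho t' i\<bar>)" by (rule Llip)
      also have "\<dots> \<le> B * (real n * ((real n + 1) * (d2 / N)))"
        by (rule mult_left_mono[OF rholip[OF t td']]) (use B1 in auto)
      also have "\<dots> < N * (d2 / N)" by (rule Nbound') (use d2(1) N0 in simp)
      also have "\<dots> = d2" using N0 by simp
      finally have "dist (L (rho t)) (L (rho t')) < d2" by (simp add: dist_norm)
      moreover have "L (rho t) \<in> K" "L (rho t') \<in> K" using rhoC LK t by auto
      ultimately have "dist (f (L (rho t))) (f (L (rho t'))) < d1" using d2(2) by blast
      moreover have "f (L (rho t)) \<in> K" "f (L (rho t')) \<in> K" using fK \<open>L (rho t) \<in> K\<close> \<open>L (rho t') \<in> K\<close> by auto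
      ultimately have "\<forall>i<n. \<bar>lam (Suc i) (f (L (rho t))) - lam (Suc i) (f (L (rho t')))\<bar> < e"
        using d1(2) by blast
      then show "\<forall>i<n. \<bar>h t i - h t' i\<bar> < e" unfolding h_def Lam_def by blast
    qed
  qed
  define \<eta> where "\<eta> = \<epsilon> / N"
  have eta: "\<eta> > 0" unfolding \<eta>_def using ep N0 by simp
  obtain t where t: "t \<in> C" "\<forall>i<n. \<bar>h t i - t i\<bar> < \<eta>"
    using approx_brouwer_cube[OF C_def hC huc eta] by blast
  define x where "x = L (rho t)"
  have xK: "x \<in> K" unfolding x_def using rhoC LK t(1) by auto
  have fxK: "f x \<in> K" using fK xK by auto
  define u where "u = h t"
  have u: "u = Lam (f x)" unfolding u_def h_def x_def ..
  have uC: "u \<in> C" "sig u \<le> 1" using LamC[OF fxK] lam0[of 0 "f x"] u by auto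
  have rhou: "rho u = u" using rhoid uC(2) .
  have Lu: "norm (L u - f x) \<le> \<epsilon>" using LLam[OF fxK] Pclose[OF fxK] u by simp
  have "\<forall>i<n. \<bar>u i - t i\<bar> \<le> \<eta>" using t(2) unfolding u_def by (auto simp: less_imp_le)
  then have "(\<Sum>i<n. \<bar>rho u i - rho t i\<bar>) \<le> real n * ((real n + 1) * \<eta>)"
    by (rule rholip[OF uC(1) t(1)])
  then have "(\<Sum>i<n. \<bar>u i - rho t i\<bar>) \<le> real n * ((real n + 1) * \<eta>)" using rhou by simp
  then have "norm (L u - x) \<le> B * (real n * ((real n + 1) * \<eta>))"
    unfolding x_def using Llip[of u "rho t"] B1 by (smt (verit) mult_left_mono)
  also have "\<dots> \<le> N * \<eta>" by (rule Nbound) (use eta in simp)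
  also have "\<dots> = \<epsilon>" unfolding \<eta>_def using N0 by simp
  finally have "norm (L u - x) \<le> \<epsilon>" .
  then have "norm (f x - x) \<le> 2 * \<epsilon>" using Lu norm_triangle_ineq[of "f x - L u" "L u - x"]
    by (simp add: norm_minus_commute)
  then show ?thesis using xK by blast
qed


lemma schauder:
  fixes K :: "'a::real_normed_vector set" and f :: "'a \<Rightarrow> 'a"
  assumes "compact K" "convex K" "K \<noteq> {}" "continuous_on K f" "f ` K \<subseteq> K"
  shows "\<exists>x\<in>K. f x = x"
proof -
  have "continuous_on K (\<lambda>x. norm (f x - x))" by (intro continuous_intros assms(4))
  then obtain x where x: "x \<in> K" "\<forall>z\<in>K. norm (f x - x) \<le> norm (f z - z)"
    using continuous_attains_inf[OF assms(1,3)] by blast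
  have small: "norm (f x - x) \<le> 2 * \<epsilon>" if ep: "\<epsilon> > 0" for \<epsilon>
  proof -
    obtain n y where ny: "\<forall>j<Suc n. y j \<in> K" "\<forall>x\<in>K. \<exists>j<Suc n. norm (x - y j) < \<epsilon>"
      using schauder_approx_setup[OF assms(1,2,3) ep] by blast
    obtain z where "z \<in> K" "norm (f z - z) \<le> 2 * \<epsilon>"
      using schauder_core[OF assms(2,1,4,5) ep ny] by blast
    then show ?thesis using x(2) by force
  qed
  have "norm (f x - x) = 0"
  proof (rule ccontr)
    assume "norm (f x - x) \<noteq> 0"
    then have "norm (f x - x) / 4 > 0" by simp
    from small[OF this] show False using \<open>norm (f x - x) / 4 > 0\<close> by linarith
  qed
  then show ?thesis using x(1) by auto
qed

theorem mainTheorem1: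
  fixes mu :: "'a::banach set \<Rightarrow> real"
    and A :: "'a set"
    and T :: "'a \<Rightarrow> 'a"
    and \<Psi> \<Phi> \<phi> :: "real \<Rightarrow> real"
  assumes mnc: "measure_of_noncompactness mu"
    and A: "A \<noteq> {}" "closed A" "bounded A" "convex A"
    and T: "continuous_on A T" "T ` A \<subseteq> A"
    and Psi_range: "\<forall>t\<ge>0. \<Psi> t \<ge> 0"
    and Psi_mono: "mono_on {0..} \<Psi>"
    and Psi_concave: "concave_on {0..} \<Psi>"
    and Psi_iter: "\<forall>t\<ge>0. (\<lambda>n. (\<Psi> ^^ n) t) \<longlonglongrightarrow> 0"
    and Phi_range: "\<forall>t\<ge>0. \<Phi> t \<ge> 0"
    and Phi_mono: "mono_on {0..} \<Phi>"
    and Phi_subadd: "\<forall>s\<ge>0. \<forall>t\<ge>0. \<Phi> (s + t) \<le> \<Phi> s + \<Phi> t"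
    and Phi_ge: "\<forall>t\<ge>0. \<Phi> t \<ge> t"
    and Phi_lim: "\<forall>x :: nat \<Rightarrow> real. (\<forall>n. x n \<ge> 0) \<longrightarrow>
                    (((\<lambda>n. \<Phi> (x n)) \<longlonglongrightarrow> 0) \<longleftrightarrow> (x \<longlonglongrightarrow> 0))"
    and phi_range: "\<forall>t\<ge>0. \<phi> t \<ge> 0"
    and phi_int: "\<forall>K. compact K \<and> K \<subseteq> {0..} \<longrightarrow> \<phi> absolutely_integrable_on K"
    and phi_pos: "\<forall>\<epsilon>>0. integral {0..\<epsilon>} \<phi> > 0"
    and contr: "\<forall>Y. Y \<noteq> {} \<and> Y \<subseteq> A \<longrightarrow>
                  \<Phi> (integral {0..mu (T ` Y)} \<phi>) \<le> \<Psi> (integral {0..mu Y} \<phi>)"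
  shows "\<exists>x\<in>A. T x = x"
proof -
  define I where "I = (\<lambda>s. integral {0..s} \<phi>)"
  have phi_ion: "\<And>s. \<phi> integrable_on {0..s}"
  proof -
    fix s :: real
    have "\<phi> absolutely_integrable_on {0..s}" using phi_int by auto
    then show "\<phi> integrable_on {0..s}" using absolutely_integrable_on_def by blast
  qed
  have I0: "\<And>s. 0 \<le> I s" unfolding I_def
    by (rule integral_nonneg[OF phi_ion]) (use phi_range in auto)
  have Imono: "\<And>s s'. 0 \<le> s \<Longrightarrow> s \<le> s' \<Longrightarrow> I s \<le> I s'" unfolding I_def
    by (rule integral_subset_le) (use phi_ion phi_range in auto)
  have mu0: "\<forall>B\<in>bdd_sets. mu B \<ge> 0" and mumono_dummy: True
    and muConv: "\<forall>B\<in>bdd_sets. mu (Conv B) = mu B"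
    and mu6: "\<forall>Bs :: nat \<Rightarrow> 'a set.
        (\<forall>n. Bs n \<in> bdd_sets \<and> closed (Bs n) \<and> Bs (Suc n) \<subseteq> Bs n) \<and>
        (\<lambda>n. mu (Bs n)) \<longlonglongrightarrow> 0 \<longrightarrow>
        (\<Inter>n. Bs n) \<noteq> {} \<and> precompact (\<Inter>n. Bs n)"
    using mnc unfolding measure_of_noncompactness_def by auto
  define As where "As = (\<lambda>k. ((\<lambda>S. Conv (T ` S)) ^^ k) A)"
  have As0: "As 0 = A" unfolding As_def by simp
  have AsS: "\<And>k. As (Suc k) = Conv (T ` As k)" unfolding As_def by simp
  have props: "\<And>k. As k \<subseteq> A \<and> As k \<noteq> {} \<and> closed (As k) \<and> convex (As k)"
  proof -
    fix k show "As k \<subseteq> A \<and> As k \<noteq> {} \<and> closed (As k) \<and> convex (As k)"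
    proof (induction k)
      case 0 then show ?case using A by (simp add: As0)
    next
      case (Suc k)
      have "T ` As k \<subseteq> A" using Suc T(2) by blast
      then have "convex hull (T ` As k) \<subseteq> A" using A(4) by (rule hull_minimal)
      then have "Conv (T ` As k) \<subseteq> A" unfolding Conv_def using A(2) by (rule closure_minimal)
      moreover have "Conv (T ` As k) \<noteq> {}" using Suc unfolding Conv_def by simp
      moreover have "closed (Conv (T ` As k))" unfolding Conv_def by simp
      moreover have "convex (Conv (T ` As k))" unfolding Conv_def by (simp add: convex_closure)
      ultimately show ?case by (simp add: AsS)
    qed
  qed
  have dec: "\<And>k. As (Suc k) \<subseteq> As k"
  proof -
    fix k show "As (Suc k) \<subseteq> As k"
    proof (induction k)
      case 0 then show ?case using props[of 1] by (simp add: As0)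
    next
      case (Suc k)
      have "T ` As (Suc k) \<subseteq> T ` As k" using Suc by blast
      then have "convex hull (T ` As (Suc k)) \<subseteq> convex hull (T ` As k)" by (rule hull_mono)
      then have "Conv (T ` As (Suc k)) \<subseteq> Conv (T ` As k)" unfolding Conv_def by (rule closure_mono)
      then show ?case by (simp add: AsS)
    qed
  qed
  have bdd: "\<And>S. S \<noteq> {} \<Longrightarrow> S \<subseteq> A \<Longrightarrow> S \<in> bdd_sets"
    unfolding bdd_sets_def using A(3) bounded_subset by blast
  have Asb: "\<And>k. As k \<in> bdd_sets" using props bdd by meson
  have TAsb: "\<And>k. T ` As k \<in> bdd_sets"
  proof -
    fix k
    have "T ` As k \<noteq> {}" using props[of k] by simp
    moreover have "T ` As k \<subseteq> A" using props[of k] T(2) by auto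
    ultimately show "T ` As k \<in> bdd_sets" by (rule bdd)
  qed
  have step: "\<And>k. I (mu (As (Suc k))) \<le> \<Psi> (I (mu (As k)))"
  proof -
    fix k
    have "mu (As (Suc k)) = mu (T ` As k)" using muConv TAsb AsS by simp
    moreover have "\<Phi> (I (mu (T ` As k))) \<le> \<Psi> (I (mu (As k)))"
      using contr props[of k] unfolding I_def by blast
    moreover have "I (mu (T ` As k)) \<le> \<Phi> (I (mu (T ` As k)))" using Phi_ge I0 by blast
    ultimately show "I (mu (As (Suc k))) \<le> \<Psi> (I (mu (As k)))" by simp
  qed
  define c where "c = I (mu A)"
  have c0: "c \<ge> 0" unfolding c_def by (rule I0)
  have iter: "\<And>k. I (mu (As k)) \<le> (\<Psi> ^^ k) c"
  proof -
    fix k show "I (mu (As k)) \<le> (\<Psi> ^^ k) c"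
    proof (induction k)
      case 0 then show ?case by (simp add: As0 c_def)
    next
      case (Suc k)
      have "I (mu (As (Suc k))) \<le> \<Psi> (I (mu (As k)))" by (rule step)
      also have "\<dots> \<le> \<Psi> ((\<Psi> ^^ k) c)"
        by (rule mono_onD[OF Psi_mono]) (use Suc I0[of "mu (As k)"] in auto)
      finally show ?case by simp
    qed
  qed
  have lim: "(\<lambda>k. (\<Psi> ^^ k) c) \<longlonglongrightarrow> 0" using Psi_iter c0 by blast
  have ev1: "eventually (\<lambda>k. (0::real) \<le> I (mu (As k))) sequentially" using I0 by simp
  have ev2: "eventually (\<lambda>k. I (mu (As k)) \<le> (\<Psi> ^^ k) c) sequentially" using iter by simp
  have Ilim: "(\<lambda>k. I (mu (As k))) \<longlonglongrightarrow> 0"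
    by (rule tendsto_sandwich[OF ev1 ev2 tendsto_const lim])
  have mulim: "(\<lambda>k. mu (As k)) \<longlonglongrightarrow> 0"
  proof (rule LIMSEQ_I)
    fix r :: real assume r: "0 < r"
    then have "I r > 0" using phi_pos unfolding I_def by blast
    then obtain no where no: "\<forall>k\<ge>no. norm (I (mu (As k)) - 0) < I r"
      using LIMSEQ_D[OF Ilim] by blast
    show "\<exists>no. \<forall>k\<ge>no. norm (mu (As k) - 0) < r"
    proof (intro exI allI impI)
      fix k assume k: "no \<le> k"
      have m0: "mu (As k) \<ge> 0" using mu0 Asb by blast
      have "mu (As k) < r"
      proof (rule ccontr)
        assume "\<not> mu (As k) < r"
        then have "I r \<le> I (mu (As k))" using Imono r by simp
        then show False using no k I0[of "mu (As k)"] by force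
      qed
      then show "norm (mu (As k) - 0) < r" using m0 by simp
    qed
  qed
  define K where "K = (\<Inter>k. As k)"
  have Kp: "K \<noteq> {} \<and> precompact K"
    using mu6[rule_format, of As] Asb props dec mulim unfolding K_def by blast
  have Kclosed: "closed K" unfolding K_def using props by blast
  have Kconvex: "convex K" unfolding K_def using props by (intro convex_INT) blast
  have KA: "K \<subseteq> A" unfolding K_def using As0 by blast
  have "complete K" using Kclosed by (simp add: complete_eq_closed)
  moreover have "\<forall>e>0. \<exists>k. finite k \<and> K \<subseteq> (\<Union>x\<in>k. ball x e)"
    using Kp unfolding totally_bounded_metric ball_def by blast
  ultimately have Kcompact: "compact K" using compact_eq_totally_bounded by blast
  have TK: "T ` K \<subseteq> K"
  proof
    fix z assume "z \<in> T ` K"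
    then obtain x where x: "x \<in> K" "z = T x" by blast
    have "z \<in> As k" for k
    proof (cases k)
      case 0 then show ?thesis using x KA T(2) As0 by blast
    next
      case (Suc j)
      have "x \<in> As j" using x unfolding K_def by blast
      then have "z \<in> T ` As j" using x by blast
      also have "T ` As j \<subseteq> convex hull (T ` As j)" by (rule hull_subset)
      also have "\<dots> \<subseteq> Conv (T ` As j)" unfolding Conv_def by (rule closure_subset)
      finally show ?thesis using Suc AsS by simp
    qed
    then show "z \<in> K" unfolding K_def by blast
  qed
  have "continuous_on K T" using T(1) KA continuous_on_subset by blast
  then obtain x where "x \<in> K" "T x = x" using schauder[OF Kcompact Kconvex _ _ TK] Kp by blast
  then show ?thesis using KA by blast
qed


end
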